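(* In the dual access model, there exists an algorithm which, on input a threshold $n\in\mathbb{N}$, $n\ge1$, and a parameter $\varepsilon>0$, and given dual access to a distribution $D$ over an arbitrary (finite) set satisfying $\min_{x\in\mathrm{supp}(D)}D(x)\ge\frac1n$, outputs with probability at least $2/3$ an estimate $\hat k$ with $|\hat k-|\mathrm{supp}(D)||\le\varepsilon n$, and has query complexity $O(1/\varepsilon^2)$.
   Context: $\mathrm{supp}(D)=\{x: D(x)>0\}$. In the dual access model, an algorithm accesses $D$ via a sampling oracle $\mathsf{SAMP}_D$ (returns $x$ with probability $D(x)$, independently of all previous calls) and an evaluation oracle $\mathsf{EVAL}_D$ (on query $x$ returns $D(x)$); each call counts as one query. *)

theory Defs
  imports "HOL-Probability.Probability"
begin

text \<open>The (finite) domain of the distribution is identified with a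
finite subset of the naturals; a distribution is a nat pmf with finite support.
An algorithm is a (well-founded, possibly infinitely branching) interaction tree:
it may call the sampling oracle SAMP (continuation receives the sample), the
evaluation oracle EVAL on any point x (continuation receives D(x)), flip a fair
internal coin (free of charge), or return an output.\<close>

datatype 'r dual_alg =
    Ret 'r
  | Samp "nat \<Rightarrow> 'r dual_alg"
  | Eval nat "real \<Rightarrow> 'r dual_alg"
  | Coin "bool \<Rightarrow> 'r dual_alg"

primrec exec :: "nat pmf \<Rightarrow> 'r dual_alg \<Rightarrow> ('r \<times> nat) pmf" where
  "exec D (Ret r) = return_pmf (r, 0)"
| "exec D (Samp f) =
     bind_pmf D (\<lambda>x. map_pmf (\<lambda>(r, q). (r, Suc q)) (exec D (f x)))"
| "exec D (Eval x g) = map_pmf (\<lambda>(r, q). (r, Suc q)) (exec D (g (pmf D x)))"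
| "exec D (Coin h) = bind_pmf (bernoulli_pmf (1/2)) (\<lambda>b. exec D (h b))"

end

theory Submission
  imports Defs
begin

primrec alg :: "real \<Rightarrow> nat \<Rightarrow> real \<Rightarrow> real dual_alg" where
  "alg d 0 acc = Ret (acc / d)"
| "alg d (Suc m) acc = Samp (\<lambda>x. Eval x (\<lambda>p. alg d m (acc + 1/p)))"

primrec S :: "nat pmf \<Rightarrow> nat \<Rightarrow> real pmf" where
  "S D 0 = return_pmf 0"
| "S D (Suc m) = bind_pmf D (\<lambda>x. map_pmf (\<lambda>s. 1 / pmf D x + s) (S D m))"

lemma exec_alg: "exec D (alg d m acc) = map_pmf (\<lambda>s. ((acc + s)/d, 2*m)) (S D m)"
proof (induction m arbitrary: acc)
  case 0
  then show ?case by simp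
next
  case (Suc m)
  show ?case
    by (simp add: Suc map_bind_pmf pmf.map_comp o_def add.assoc)
qed

lemma finite_S: "finite (set_pmf D) \<Longrightarrow> finite (set_pmf (S D m))"
  by (induction m) auto

lemma integral_bind_pmf_fin:
  fixes f :: "'b \<Rightarrow> real"
  assumes A: "finite (set_pmf M)" and N: "\<And>x. x \<in> set_pmf M \<Longrightarrow> finite (set_pmf (N x))"
  shows "(\<integral>y. f y \<partial>bind_pmf M N) = (\<integral>x. (\<integral>y. f y \<partial>N x) \<partial>M)"
proof -
  define U where "U = (\<Union>x\<in>set_pmf M. set_pmf (N x))"
  have U: "finite U" using A N by (auto simp: U_def)
  have sub: "\<And>x. x \<in> set_pmf M \<Longrightarrow> set_pmf (N x) \<subseteq> U" by (auto simp: U_def)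
  have "(\<integral>y. f y \<partial>bind_pmf M N) = (\<Sum>y\<in>U. f y * pmf (bind_pmf M N) y)"
    by (rule integral_measure_pmf_real) (use U in \<open>auto simp: U_def\<close>)
  also have "\<dots> = (\<Sum>y\<in>U. f y * (\<Sum>x\<in>set_pmf M. pmf (N x) y * pmf M x))"
    by (intro sum.cong refl arg_cong2[where f="(*)"], simp add: pmf_bind,
        rule integral_measure_pmf_real) (auto simp: A)
  also have "\<dots> = (\<Sum>x\<in>set_pmf M. (\<Sum>y\<in>U. f y * pmf (N x) y) * pmf M x)"
    by (simp add: sum_distrib_left sum_distrib_right mult_ac sum.swap[of _ U])
  also have "\<dots> = (\<Sum>x\<in>set_pmf M. (\<integral>y. f y \<partial>N x) * pmf M x)"
    by (intro sum.cong refl arg_cong2[where f="(*)"], rule integral_measure_pmf_real[symmetric])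
       (use U sub in auto)
  also have "\<dots> = (\<integral>x. (\<integral>y. f y \<partial>N x) \<partial>M)"
    by (rule integral_measure_pmf_real[symmetric]) (auto simp: A)
  finally show ?thesis .
qed

locale fin_dist =
  fixes D :: "nat pmf" and n :: nat
  assumes fin: "finite (set_pmf D)" and n1: "n \<ge> 1"
    and lb: "\<forall>x\<in>set_pmf D. pmf D x \<ge> 1 / real n"
begin

definition c :: real where "c = real (card (set_pmf D))"
definition Y :: "nat \<Rightarrow> real" where "Y x = 1 / pmf D x"
definition v :: real where "v = (\<integral>x. (Y x - c)^2 \<partial>D)"

lemma card_le: "c \<le> real n"
proof -
  have "c / real n = (\<Sum>x\<in>set_pmf D. 1 / real n)" by (simp add: c_def)
  also have "\<dots> \<le> (\<Sum>x\<in>set_pmf D. pmf D x)" using lb by (intro sum_mono) auto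
  also have "\<dots> = 1" using fin by (rule sum_pmf_eq_1) auto
  finally show ?thesis using n1 by (simp add: divide_le_eq)
qed

lemma card_ge: "c \<ge> 1"
proof -
  have "set_pmf D \<noteq> {}" by (rule set_pmf_not_empty)
  then show ?thesis using fin by (simp add: c_def Suc_le_eq card_gt_0_iff)
qed

lemma Y_bounds: "x \<in> set_pmf D \<Longrightarrow> 1 \<le> Y x \<and> Y x \<le> real n"
proof -
  assume x: "x \<in> set_pmf D"
  have p0: "pmf D x > 0" using x by (simp add: set_pmf_iff pmf_nonneg order_le_neq_trans)
  have p1: "pmf D x \<le> 1" by (rule pmf_le_1)
  have "1 / real n \<le> pmf D x" using lb x by auto
  then have "1 \<le> real n * pmf D x" using n1 by (simp add: divide_le_eq mult.commute)
  then show ?thesis using p0 p1 by (simp add: Y_def divide_le_eq le_divide_eq mult.commute)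
qed

lemma EY: "(\<integral>x. Y x \<partial>D) = c"
proof -
  have "(\<integral>x. Y x \<partial>D) = (\<Sum>x\<in>set_pmf D. Y x * pmf D x)"
    by (rule integral_measure_pmf_real) (auto simp: fin)
  also have "\<dots> = (\<Sum>x\<in>set_pmf D. 1)"
    by (intro sum.cong refl) (auto simp: Y_def set_pmf_iff)
  finally show ?thesis by (simp add: c_def)
qed

lemma v_le: "v \<le> (real n)^2"
proof -
  have "v = (\<Sum>x\<in>set_pmf D. (Y x - c)^2 * pmf D x)"
    unfolding v_def by (rule integral_measure_pmf_real) (auto simp: fin)
  also have "\<dots> \<le> (\<Sum>x\<in>set_pmf D. (real n)^2 * pmf D x)"
  proof (intro sum_mono mult_right_mono)
    fix x assume x: "x \<in> set_pmf D"
    have "\<bar>Y x - c\<bar> \<le> real n" using Y_bounds[OF x] card_le card_ge by auto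
    then show "(Y x - c)^2 \<le> (real n)^2"
      using abs_le_square_iff[of "Y x - c" "real n"] by simp
  qed auto
  also have "\<dots> = (real n)^2" using fin by (simp add: sum_distrib_left[symmetric] sum_pmf_eq_1)
  finally show ?thesis .
qed

lemma fS: "finite (set_pmf (S D m))" using finite_S[OF fin] .

lemma ES: "(\<integral>s. s \<partial>S D m) = real m * c"
proof (induction m)
  case 0
  then show ?case by simp
next
  case (Suc m)
  have "(\<integral>s. s \<partial>S D (Suc m)) = (\<integral>x. (\<integral>s. 1 / pmf D x + s \<partial>S D m) \<partial>D)"
    by (simp add: integral_bind_pmf_fin fin fS)
  also have "\<dots> = (\<integral>x. Y x + real m * c \<partial>D)"
    by (intro Bochner_Integration.integral_cong refl)
       (simp add: Suc Y_def integrable_measure_pmf_finite fS)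
  also have "\<dots> = c + real m * c"
    by (simp add: EY integrable_measure_pmf_finite fin)
  finally show ?case by (simp add: algebra_simps)
qed

lemma VS: "(\<integral>s. (s - real m * c)^2 \<partial>S D m) = real m * v"
proof (induction m)
  case 0
  then show ?case by simp
next
  case (Suc m)
  have I: "integrable (measure_pmf (S D m)) f" for f :: "real \<Rightarrow> real"
    by (rule integrable_measure_pmf_finite[OF fS])
  have J: "integrable (measure_pmf D) f" for f :: "nat \<Rightarrow> real"
    by (rule integrable_measure_pmf_finite[OF fin])
  have "(\<integral>s. (s - real (Suc m) * c)^2 \<partial>S D (Suc m))
      = (\<integral>x. (\<integral>s. (1 / pmf D x + s - real (Suc m) * c)^2 \<partial>S D m) \<partial>D)"
    by (simp add: integral_bind_pmf_fin fin fS)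
  also have "\<dots> = (\<integral>x. (Y x - c)^2 + real m * v \<partial>D)"
  proof (intro Bochner_Integration.integral_cong refl)
    fix x
    have eq: "(1 / pmf D x + s - real (Suc m) * c)^2
       = (Y x - c)^2 + 2 * (Y x - c) * (s - real m * c) + (s - real m * c)^2" for s
      by (simp only: Y_def[symmetric]) (simp add: power2_eq_square algebra_simps)
    have "(\<integral>s. (1 / pmf D x + s - real (Suc m) * c)^2 \<partial>S D m)
        = (\<integral>s. (Y x - c)^2 + 2 * (Y x - c) * (s - real m * c) + (s - real m * c)^2 \<partial>S D m)"
      by (simp only: eq)
    also have "\<dots> = (Y x - c)^2 + 2 * (Y x - c) * ((\<integral>s. s \<partial>S D m) - real m * c) + real m * v"
      by (simp add: I Suc)
    also have "\<dots> = (Y x - c)^2 + real m * v" by (simp add: ES)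
    finally show "(\<integral>s. (1 / pmf D x + s - real (Suc m) * c)^2 \<partial>S D m) = (Y x - c)^2 + real m * v" .
  qed
  also have "\<dots> = v + real m * v" by (simp add: J v_def)
  finally show ?case by (simp add: algebra_simps)
qed

lemma good:
  assumes m: "real m * \<epsilon>^2 \<ge> 3" and e: "\<epsilon> > 0"
  shows "measure (S D m) {s. \<bar>s / real m - c\<bar> \<le> \<epsilon> * real n} \<ge> 2/3"
proof -
  have mpos: "real m > 0"
  proof (rule ccontr)
    assume "\<not> real m > 0" then have "m = 0" by simp
    then show False using m by simp
  qed
  have npos: "real n > 0" using n1 by simp
  define a where "a = real m * \<epsilon> * real n"
  have apos: "a > 0" using mpos npos e by (simp add: a_def)
  have cheb: "measure (S D m) {x \<in> space (measure_pmf (S D m)). a \<le> \<bar>x - measure_pmf.expectation (S D m) (\<lambda>s. s)\<bar>}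
      \<le> measure_pmf.variance (S D m) (\<lambda>s. s) / a\<^sup>2"
    by (rule measure_pmf.Chebyshev_inequality) (auto simp: apos integrable_measure_pmf_finite fS)
  have ex: "measure_pmf.expectation (S D m) (\<lambda>s. s) = real m * c" by (rule ES)
  have var: "measure_pmf.variance (S D m) (\<lambda>s. s) = real m * v" by (simp only: ex VS)
  define B where "B = {x. a \<le> \<bar>x - real m * c\<bar>}"
  have PB: "measure (S D m) B \<le> real m * v / a\<^sup>2" using cheb by (simp add: ex VS B_def)
  also have "\<dots> \<le> real m * (real n)^2 / a\<^sup>2"
    using v_le mpos by (intro divide_right_mono mult_left_mono) auto
  also have "\<dots> = 1 / (real m * \<epsilon>^2)"
    using mpos npos e by (simp add: a_def power2_eq_square field_simps)
  also have "\<dots> \<le> 1/3" using m e mpos by (simp add: divide_le_eq field_simps)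
  finally have PB3: "measure (S D m) B \<le> 1/3" .
  define G where "G = {s. \<bar>s / real m - c\<bar> \<le> \<epsilon> * real n}"
  have sub: "UNIV - G \<subseteq> B"
  proof
    fix s assume "s \<in> UNIV - G"
    then have "\<epsilon> * real n < \<bar>s / real m - c\<bar>" by (auto simp: G_def)
    then have "real m * (\<epsilon> * real n) < real m * \<bar>s / real m - c\<bar>" using mpos by simp
    also have "real m * \<bar>s / real m - c\<bar> = \<bar>s - real m * c\<bar>"
    proof -
      have "real m * \<bar>s / real m - c\<bar> = \<bar>real m * (s / real m - c)\<bar>"
        using mpos by (simp add: abs_mult)
      also have "real m * (s / real m - c) = s - real m * c"
        using mpos by (simp add: field_simps)
      finally show ?thesis .
    qed
    finally show "s \<in> B" by (simp add: B_def a_def mult.assoc)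
  qed
  have "measure (S D m) (UNIV - G) \<le> measure (S D m) B"
    using sub by (intro measure_pmf.finite_measure_mono) auto
  moreover have "measure (S D m) (UNIV - G) = 1 - measure (S D m) G"
    using measure_pmf.prob_compl[of G "S D m"] by simp
  ultimately show ?thesis using PB3 by (simp add: G_def)
qed

end

definition M :: "real \<Rightarrow> nat" where "M \<epsilon> = nat \<lceil>3 / \<epsilon>^2\<rceil>"

definition Alg :: "nat \<Rightarrow> real \<Rightarrow> real dual_alg" where
  "Alg n \<epsilon> = (if \<epsilon> \<ge> 1 then Ret 0 else alg (real (M \<epsilon>)) (M \<epsilon>) 0)"

lemma M_bounds:
  assumes "0 < \<epsilon>" "\<epsilon> < 1"
  shows "real (M \<epsilon>) * \<epsilon>^2 \<ge> 3" "real (2 * M \<epsilon>) \<le> 8 / \<epsilon>^2"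
proof -
  have e2: "\<epsilon>^2 > 0" using assms by simp
  have e3: "\<epsilon>^2 < 1" using assms by (simp add: power_less_one_iff abs_less_iff)
  have ge: "real (M \<epsilon>) \<ge> 3 / \<epsilon>^2" unfolding M_def by linarith
  have le: "real (M \<epsilon>) \<le> 3 / \<epsilon>^2 + 1" unfolding M_def
    using e2 by (simp add: of_nat_nat)
  show "real (M \<epsilon>) * \<epsilon>^2 \<ge> 3" using ge e2 by (simp add: divide_le_eq)
  have "1 \<le> 1 / \<epsilon>^2" using e2 e3 by (simp add: le_divide_eq)
  then have "real (M \<epsilon>) \<le> 4 / \<epsilon>^2" using le by simp
  then show "real (2 * M \<epsilon>) \<le> 8 / \<epsilon>^2" by simp
qed

theorem theorem14:
  "\<exists>C::real. C > 0 \<and> (\<exists>A :: nat \<Rightarrow> real \<Rightarrow> real dual_alg.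
     \<forall>n::nat. \<forall>\<epsilon>::real. \<forall>D :: nat pmf.
       n \<ge> 1 \<longrightarrow> \<epsilon> > 0 \<longrightarrow> finite (set_pmf D) \<longrightarrow>
       (\<forall>x\<in>set_pmf D. pmf D x \<ge> 1 / real n) \<longrightarrow>
         measure_pmf.prob (exec D (A n \<epsilon>))
            {(k, q). \<bar>k - real (card (set_pmf D))\<bar> \<le> \<epsilon> * real n} \<ge> 2/3
       \<and> (\<forall>(k, q)\<in>set_pmf (exec D (A n \<epsilon>)). real q \<le> C / \<epsilon>\<^sup>2))"
proof (intro exI[of _ 8] conjI exI[of _ Alg] allI impI)
  fix n :: nat and \<epsilon> :: real and D :: "nat pmf"
  assume n1: "n \<ge> 1" and e: "\<epsilon> > 0" and fin: "finite (set_pmf D)"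
    and lb: "\<forall>x\<in>set_pmf D. pmf D x \<ge> 1 / real n"
  interpret fin_dist D n using n1 fin lb by unfold_locales auto
  have "measure_pmf.prob (exec D (Alg n \<epsilon>))
            {(k, q). \<bar>k - real (card (set_pmf D))\<bar> \<le> \<epsilon> * real n} \<ge> 2/3
       \<and> (\<forall>(k, q)\<in>set_pmf (exec D (Alg n \<epsilon>)). real q \<le> 8 / \<epsilon>\<^sup>2)"
  proof (cases "\<epsilon> \<ge> 1")
    case True
    have "c \<le> \<epsilon> * real n" using card_le True n1
      by (metis mult_left_mono[of 1 \<epsilon> "real n"] mult_1 of_nat_0_le_iff order_trans mult.commute)
    then show ?thesis using True card_ge by (simp add: Alg_def c_def)
  next
    case False
    let ?m = "M \<epsilon>"
    have ex: "exec D (Alg n \<epsilon>) = map_pmf (\<lambda>s. (s / real ?m, 2 * ?m)) (S D ?m)"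
      using False by (simp add: Alg_def exec_alg)
    have mb: "real ?m * \<epsilon>^2 \<ge> 3" "real (2 * ?m) \<le> 8 / \<epsilon>^2" using M_bounds e False by auto
    have "measure (S D ?m) {s. \<bar>s / real ?m - c\<bar> \<le> \<epsilon> * real n} \<ge> 2/3"
      by (rule good[OF mb(1) e])
    moreover have "(\<lambda>s. (s / real ?m, 2 * ?m)) -` {(k, q). \<bar>k - real (card (set_pmf D))\<bar> \<le> \<epsilon> * real n}
        = {s. \<bar>s / real ?m - c\<bar> \<le> \<epsilon> * real n}" by (auto simp: c_def)
    ultimately show ?thesis using mb(2) by (simp add: ex)
  qed
  then show "measure_pmf.prob (exec D (Alg n \<epsilon>))
            {(k, q). \<bar>k - real (card (set_pmf D))\<bar> \<le> \<epsilon> * real n} \<ge> 2/3"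
       "\<forall>(k, q)\<in>set_pmf (exec D (Alg n \<epsilon>)). real q \<le> 8 / \<epsilon>\<^sup>2" by auto
qed simp

end
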